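(* Let $\hat\Phi\colon\mathcal{X}\to\mathbb{R}^{N_2}$ be a ReLU network with one hidden layer of $N_1$ neurons, $\hat\Phi(x)=\sum_{i=1}^{N_1}\hat w_{2,i}\phi(\langle\hat w_{1,i},x\rangle-\hat b_{1,i})-\hat b_{2,i}$ with nonzero $\hat w_{1,i}$, whose biases are of the form $\hat b_{1,i}=\langle\hat w_{1,i},x_i\rangle$ with $x_i\in\mathcal{X}$ for $i=1,\dots,N_1$. Then for any $\epsilon>0$ there exists a unit sampled network $\Phi$ with one hidden layer such that $\sup_{x\in\mathcal{X}}\|\Phi(x)-\hat\Phi(x)\|<\epsilon$.
   Context: Fix $D\ge1$, Euclidean norm and inner product on $\mathbb{R}^D$, $\phi(t)=\max\{t,0\}$. For $A\subseteq\mathbb{R}^D$ let $d(z,A)=\inf_{a\in A}\|z-a\|$, $\mathrm{Med}(A)=\{z:\exists p\neq q\in A,\ \|p-z\|=\|q-z\|=d(z,A)\}$, reach $\tau_A=\inf_{a\in A}d(a,\mathrm{Med}(A))$. Let $\mathcal{X}'\subset\mathbb{R}^D$ be nonempty compact with $\tau_{\mathcal{X}'}>0$, fix $0<\epsilon_I<\min\{\tau_{\mathcal{X}'},1\}$, and $\mathcal{X}=\{x:d(x,\mathcal{X}')\le\epsilon_I\}$. A unit sampled network with one hidden layer is $\Phi(x)=\sum_i w_{2,i}\phi(\langle w_{1,i},x\rangle-b_{1,i})-b_{2,i}$ where for each hidden neuron there are distinct $x^{(1)}_{0,i},x^{(2)}_{0,i}\in\mathcal{X}$ with $w_{1,i}=\frac{x^{(2)}_{0,i}-x^{(1)}_{0,i}}{\|x^{(2)}_{0,i}-x^{(1)}_{0,i}\|}$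 and $b_{1,i}=\langle w_{1,i},x^{(1)}_{0,i}\rangle$; the output parameters $w_{2,i},b_{2,i}$ are unrestricted. *)

theory Defs
  imports "HOL-Analysis.Analysis"
begin

definition relu :: "real \<Rightarrow> real" where
  "relu t = max t 0"

text \<open>Medial axis and reach. The reach is ereal-valued so that an empty medial axis
  gives reach = infinity (inf over the empty set), as in the paper.\<close>
definition medial_axis :: "'a::real_normed_vector set \<Rightarrow> 'a set" where
  "medial_axis A = {z. \<exists>p q. p \<in> A \<and> q \<in> A \<and> p \<noteq> q \<and>
      dist p z = infdist z A \<and> dist q z = infdist z A}"

definition reach :: "'a::real_normed_vector set \<Rightarrow> ereal" where
  "reach A = (INF a\<in>A. INF z\<in>medial_axis A. ereal (dist a z))"

definition shallow_net ::
  "nat \<Rightarrow> (nat \<Rightarrow> 'a::euclidean_space) \<Rightarrow> (nat \<Rightarrow> real) \<Rightarrow> (nat \<Rightarrow> 'b::real_normed_vector)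
     \<Rightarrow> (nat \<Rightarrow> 'b) \<Rightarrow> 'a \<Rightarrow> 'b" where
  "shallow_net N w1 b1 w2 b2 x = (\<Sum>i<N. relu (w1 i \<bullet> x - b1 i) *\<^sub>R w2 i - b2 i)"

definition unit_sampled :: "'a::euclidean_space set \<Rightarrow> nat \<Rightarrow> (nat \<Rightarrow> 'a) \<Rightarrow> (nat \<Rightarrow> real) \<Rightarrow> bool" where
  "unit_sampled X N w1 b1 \<longleftrightarrow> (\<forall>i<N. \<exists>p q. p \<in> X \<and> q \<in> X \<and> p \<noteq> q \<and>
      w1 i = (1 / norm (q - p)) *\<^sub>R (q - p) \<and> b1 i = w1 i \<bullet> p)"

end

theory Submission
  imports Defs
begin

lemma relu_scale: "0 \<le> k \<Longrightarrow> relu (k * a) = k * relu a"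
  unfolding relu_def by (simp add: max_def mult_le_0_iff)

lemma relu_lip: "\<bar>relu a - relu b\<bar> \<le> \<bar>a - b\<bar>"
  unfolding relu_def by (auto simp: max_def)

lemma neuron:
  fixes w :: "'a::euclidean_space" and v :: "'b::real_normed_vector"
  assumes "w \<noteq> 0"
  shows "norm (relu ((1 / norm w) *\<^sub>R w \<bullet> x - (1 / norm w) *\<^sub>R w \<bullet> p) *\<^sub>R (norm w *\<^sub>R v)
            - relu (w \<bullet> x - w \<bullet> y) *\<^sub>R v) \<le> norm w * norm v * norm (p - y)"
proof -
  define u where "u = (1 / norm w) *\<^sub>R w"
  have nu: "norm u = 1" using assms by (simp add: u_def)
  have wu: "w = norm w *\<^sub>R u" using assms by (simp add: u_def)
  have "w \<bullet> x - w \<bullet> y = norm w * (u \<bullet> x - u \<bullet> y)"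
    by (subst wu, subst (2) wu) (simp add: algebra_simps)
  hence r: "relu (w \<bullet> x - w \<bullet> y) = norm w * relu (u \<bullet> x - u \<bullet> y)"
    by (simp add: relu_scale)
  have eq: "relu (u \<bullet> x - u \<bullet> p) *\<^sub>R (norm w *\<^sub>R v) - relu (w \<bullet> x - w \<bullet> y) *\<^sub>R v
      = (norm w * (relu (u \<bullet> x - u \<bullet> p) - relu (u \<bullet> x - u \<bullet> y))) *\<^sub>R v"
    by (simp add: r algebra_simps)
  have "\<bar>relu (u \<bullet> x - u \<bullet> p) - relu (u \<bullet> x - u \<bullet> y)\<bar> \<le> \<bar>u \<bullet> (y - p)\<bar>"
    using relu_lip[of "u \<bullet> x - u \<bullet> p" "u \<bullet> x - u \<bullet> y"] by (simp add: inner_diff_right)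
  also have "\<dots> \<le> norm u * norm (y - p)" by (rule Cauchy_Schwarz_ineq2)
  also have "\<dots> = norm (p - y)" using nu by (simp add: norm_minus_commute)
  finally have b: "\<bar>relu (u \<bullet> x - u \<bullet> p) - relu (u \<bullet> x - u \<bullet> y)\<bar> \<le> norm (p - y)" .
  have "norm ((norm w * (relu (u \<bullet> x - u \<bullet> p) - relu (u \<bullet> x - u \<bullet> y))) *\<^sub>R v)
     = norm w * \<bar>relu (u \<bullet> x - u \<bullet> p) - relu (u \<bullet> x - u \<bullet> y)\<bar> * norm v"
    by (simp add: abs_mult)
  also have "\<dots> \<le> norm w * norm (p - y) * norm v"
    by (intro mult_right_mono mult_left_mono b) auto
  finally show ?thesis using eq unfolding u_def by (simp add: mult_ac)
qed

theorem lemma3: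
  fixes X' :: "'a::euclidean_space set" and \<epsilon>I :: real
    and N :: nat and w1 :: "nat \<Rightarrow> 'a" and b1 :: "nat \<Rightarrow> real"
    and w2 :: "nat \<Rightarrow> 'b::euclidean_space" and b2 :: "nat \<Rightarrow> 'b"
    and xs :: "nat \<Rightarrow> 'a" and \<epsilon> :: real
  assumes "compact X'" and "X' \<noteq> {}" and "reach X' > 0"
    and "0 < \<epsilon>I" and "ereal \<epsilon>I < reach X'" and "\<epsilon>I < 1"
    and "X = {x. infdist x X' \<le> \<epsilon>I}"
    and "\<forall>i<N. w1 i \<noteq> 0"
    and "\<forall>i<N. xs i \<in> X \<and> b1 i = w1 i \<bullet> xs i"
    and "\<epsilon> > 0"
  shows "\<exists>M v1 c1 (v2 :: nat \<Rightarrow> 'b) c2. unit_sampled X M v1 c1 \<and>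
           (SUP x\<in>X. ereal (norm (shallow_net M v1 c1 v2 c2 x - shallow_net N w1 b1 w2 b2 x)))
             < ereal \<epsilon>"
proof -
  have cl: "closed X'" using assms(1) by (simp add: compact_imp_closed)
  define xp where "xp i = (SOME z. z \<in> X' \<and> infdist (xs i) X' = dist (xs i) z)" for i
  have xp: "xp i \<in> X' \<and> infdist (xs i) X' = dist (xs i) (xp i)" for i
    unfolding xp_def by (rule someI_ex) (use infdist_attains_inf[OF cl assms(2)] in blast)
  have dxp: "dist (xs i) (xp i) \<le> \<epsilon>I" if "i < N" for i
    using xp[of i] assms(7,9) that by auto
  define K where "K = (\<Sum>i<N. norm (w1 i) * norm (w2 i))"
  have K0: "K \<ge> 0" unfolding K_def by (auto intro: sum_nonneg)
  define s where "s = min 1 (\<epsilon> / (2 * (1 + K)))"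
  have s0: "0 < s" "s \<le> 1" using assms(10) K0 by (auto simp: s_def)
  have sK: "s * K \<le> \<epsilon> / 2"
  proof -
    have "s * K \<le> (\<epsilon> / (2 * (1 + K))) * K" using K0 by (intro mult_right_mono) (auto simp: s_def)
    also have "\<dots> \<le> (\<epsilon> / (2 * (1 + K))) * (1 + K)" using K0 assms(10) by (intro mult_left_mono) auto
    also have "\<dots> = \<epsilon> / 2" using K0 by (simp add: field_simps)
    finally show ?thesis .
  qed
  define p where "p i = xs i + s *\<^sub>R (xp i - xs i)" for i
  define u where "u i = (1 / norm (w1 i)) *\<^sub>R w1 i" for i
  define q where "q i = p i + (s * \<epsilon>I) *\<^sub>R u i" for i
  have nu: "norm (u i) = 1" if "i < N" for i using assms(8) that by (simp add: u_def)
  have pxp: "p i - xp i = (1 - s) *\<^sub>R (xs i - xp i)" for i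
    by (simp add: p_def algebra_simps)
  have dp: "norm (p i - xp i) \<le> (1 - s) * \<epsilon>I" if "i < N" for i
    using dxp[OF that] s0 by (simp add: pxp dist_norm mult_left_mono)
  have pX: "p i \<in> X" if "i < N" for i
  proof -
    have "infdist (p i) X' \<le> dist (p i) (xp i)" using xp infdist_le by blast
    also have "\<dots> \<le> \<epsilon>I" using dp[OF that] s0 assms(4) by (simp add: dist_norm) (smt (verit) mult_left_le_one_le)
    finally show ?thesis using assms(7) by simp
  qed
  have qX: "q i \<in> X" if "i < N" for i
  proof -
    have "infdist (q i) X' \<le> dist (q i) (xp i)" using xp infdist_le by blast
    also have "\<dots> = norm ((p i - xp i) + (s * \<epsilon>I) *\<^sub>R u i)" by (simp add: dist_norm q_def algebra_simps)
    also have "\<dots> \<le> norm (p i - xp i) + s * \<epsilon>I" using norm_triangle_ineq[of "p i - xp i" "(s * \<epsilon>I) *\<^sub>R u i"]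
      nu[OF that] s0 assms(4) by simp
    also have "\<dots> \<le> \<epsilon>I" using dp[OF that] by (simp add: algebra_simps)
    finally show ?thesis using assms(7) by simp
  qed
  define v1 where "v1 = u"
  define c1 where "c1 i = u i \<bullet> p i" for i
  define v2 where "v2 i = norm (w1 i) *\<^sub>R w2 i" for i
  have us: "unit_sampled X N v1 c1"
    unfolding unit_sampled_def
  proof (intro allI impI)
    fix i assume i: "i < N"
    have qp: "q i - p i = (s * \<epsilon>I) *\<^sub>R u i" by (simp add: q_def)
    have pos: "s * \<epsilon>I > 0" using s0 assms(4) by simp
    have ne: "p i \<noteq> q i" using qp pos nu[OF i] by auto
    have "(1 / norm (q i - p i)) *\<^sub>R (q i - p i) = u i" using qp pos nu[OF i] by auto
    thus "\<exists>pa qa. pa \<in> X \<and> qa \<in> X \<and> pa \<noteq> qa \<and> v1 i = (1 / norm (qa - pa)) *\<^sub>R (qa - pa) \<and> c1 i = v1 i \<bullet> pa"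
      using pX[OF i] qX[OF i] ne unfolding v1_def c1_def by metis
  qed
  have bound: "norm (shallow_net N v1 c1 v2 b2 x - shallow_net N w1 b1 w2 b2 x) \<le> \<epsilon> / 2" for x
  proof -
    have "shallow_net N v1 c1 v2 b2 x - shallow_net N w1 b1 w2 b2 x
       = (\<Sum>i<N. relu (u i \<bullet> x - u i \<bullet> p i) *\<^sub>R (norm (w1 i) *\<^sub>R w2 i) - relu (w1 i \<bullet> x - w1 i \<bullet> xs i) *\<^sub>R w2 i)"
      unfolding shallow_net_def v1_def c1_def v2_def using assms(9)
      by (simp add: sum_subtractf[symmetric])
    also have "norm \<dots> \<le> (\<Sum>i<N. norm (relu (u i \<bullet> x - u i \<bullet> p i) *\<^sub>R (norm (w1 i) *\<^sub>R w2 i) - relu (w1 i \<bullet> x - w1 i \<bullet> xs i) *\<^sub>R w2 i))"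
      by (rule norm_sum)
    also have "\<dots> \<le> (\<Sum>i<N. norm (w1 i) * norm (w2 i) * s)"
    proof (rule sum_mono)
      fix i assume "i \<in> {..<N}"
      hence i: "i < N" by simp
      have "norm (p i - xs i) = s * dist (xs i) (xp i)" using s0 by (simp add: p_def dist_norm norm_minus_commute)
      also have "\<dots> \<le> s * \<epsilon>I" using dxp[OF i] s0 by (simp add: mult_left_mono)
      also have "\<dots> \<le> s" using s0 assms(6) by simp
      finally have npy: "norm (p i - xs i) \<le> s" .
      have "norm (relu (u i \<bullet> x - u i \<bullet> p i) *\<^sub>R (norm (w1 i) *\<^sub>R w2 i) - relu (w1 i \<bullet> x - w1 i \<bullet> xs i) *\<^sub>R w2 i)
          \<le> norm (w1 i) * norm (w2 i) * norm (p i - xs i)"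
        using neuron[of "w1 i" x "p i" "w2 i" "xs i"] assms(8) i unfolding u_def by simp
      also have "\<dots> \<le> norm (w1 i) * norm (w2 i) * s" using npy by (intro mult_left_mono) auto
      finally show "norm (relu (u i \<bullet> x - u i \<bullet> p i) *\<^sub>R (norm (w1 i) *\<^sub>R w2 i) - relu (w1 i \<bullet> x - w1 i \<bullet> xs i) *\<^sub>R w2 i)
          \<le> norm (w1 i) * norm (w2 i) * s" .
    qed
    also have "\<dots> = s * K" unfolding K_def by (simp add: sum_distrib_left mult_ac)
    also have "\<dots> \<le> \<epsilon> / 2" by (rule sK)
    finally show ?thesis .
  qed
  have "(SUP x\<in>X. ereal (norm (shallow_net N v1 c1 v2 b2 x - shallow_net N w1 b1 w2 b2 x))) \<le> ereal (\<epsilon> / 2)"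
    by (rule SUP_least) (use bound in simp)
  also have "\<dots> < ereal \<epsilon>" using assms(10) by simp
  finally show ?thesis using us by blast
qed

end
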